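(* Let $k\ge 4$, $n=2k-1$, $\eta=(\eta_1<\dots<\eta_l)\in\mathbb{D}_k\setminus\{(3,k-3)\}$, and let $Y_{2\eta^*}$ be the Young diagram whose main diagonal consists of exactly the cells $c_{1,1},\dots,c_{l+1,l+1}$ and which satisfies $h_{1,1}=2n-4$, $h_{i,i}=2\eta_{l-(i-2)}$ for $2\le i\le l+1$, and $a(c_{i,i})=l(c_{i,i})+1$ for $1\le i\le l+1$. Let $\lambda$ be the partition whose parts are the hook lengths of the first-column cells of $Y_{2\eta^*}$. Then $n-2$ is not a part of $\lambda$ (equivalently, $n-2\in\mathbb{N}_0\setminus\lambda$).
   Context: $\mathbb{D}_N$ is the set of partitions of $N$ into distinct parts, i.e. sequences $(\eta_1<\dots<\eta_l)$ of positive integers with sum $N$ and $l\ge 2$. Young diagrams are in English convention: rows top to bottom, columns left to right, $c_{i,j}$ the cell in row $i$, column $j$; arm $a(c_{i,j})$ = number of cells to its right in its row, leg $l(c_{i,j})$ = number of cells below it in its column, hook length $h_{i,j}=a+l+1$. *)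

theory Defs
  imports Main
begin

text \<open>Young diagrams in English convention, as finite sets of cells (i,j) = (row, column),
  rows and columns indexed from 1.\<close>

definition young_diagram :: "(nat \<times> nat) set \<Rightarrow> bool" where
  "young_diagram Y \<longleftrightarrow> finite Y \<and> (\<forall>(i,j)\<in>Y. 1 \<le> i \<and> 1 \<le> j) \<and>
     (\<forall>i j i' j'. (i,j) \<in> Y \<and> 1 \<le> i' \<and> i' \<le> i \<and> 1 \<le> j' \<and> j' \<le> j \<longrightarrow> (i',j') \<in> Y)"

definition arm :: "(nat \<times> nat) set \<Rightarrow> nat \<times> nat \<Rightarrow> nat" where
  "arm Y c = card {j'. j' > snd c \<and> (fst c, j') \<in> Y}"

definition leg :: "(nat \<times> nat) set \<Rightarrow> nat \<times> nat \<Rightarrow> nat" where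
  "leg Y c = card {i'. i' > fst c \<and> (i', snd c) \<in> Y}"

definition hook :: "(nat \<times> nat) set \<Rightarrow> nat \<times> nat \<Rightarrow> nat" where
  "hook Y c = arm Y c + leg Y c + 1"

definition distinct_partitions :: "nat \<Rightarrow> nat list set" where
  "distinct_partitions N = {eta. sorted_wrt (<) eta \<and> (\<forall>x\<in>set eta. 0 < x) \<and>
                               sum_list eta = N \<and> length eta \<ge> 2}"

end

theory Submission
  imports Defs
begin

theorem corollary3p18:
  fixes k n :: nat and eta :: "nat list" and Y :: "(nat \<times> nat) set"
  assumes "k \<ge> 4" and "n = 2 * k - 1"
    and "eta \<in> distinct_partitions k" and "eta \<noteq> [3, k - 3]"
    and "young_diagram Y"
    and "{i. (i, i) \<in> Y} = {1 .. length eta + 1}"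
    and "hook Y (1, 1) = 2 * n - 4"
    and "\<forall>i\<in>{2 .. length eta + 1}. hook Y (i, i) = 2 * eta ! (length eta + 1 - i)"
    and "\<forall>i\<in>{1 .. length eta + 1}. arm Y (i, i) = leg Y (i, i) + 1"
  shows "n - 2 \<notin> {hook Y (i, 1) | i. (i, 1) \<in> Y}"
proof
  assume "n - 2 \<in> {hook Y (i, 1) | i. (i, 1) \<in> Y}"
  then obtain i where iY: "(i,1) \<in> Y" and hi: "hook Y (i,1) = n - 2" by auto
  have fin: "finite Y" and pos: "\<And>a b. (a,b) \<in> Y \<Longrightarrow> 1 \<le> a \<and> 1 \<le> b"
    and dc: "\<And>a b a' b'. (a,b) \<in> Y \<Longrightarrow> 1 \<le> a' \<Longrightarrow> a' \<le> a \<Longrightarrow> 1 \<le> b' \<Longrightarrow> b' \<le> b \<Longrightarrow> (a',b') \<in> Y"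
    using assms(5) unfolding young_diagram_def by blast+
  have i1: "1 \<le> i" using pos[OF iY] by simp
  have finrow: "\<And>a P. finite {j'. P j' \<and> (a, j') \<in> Y}"
  proof -
    fix a P
    have "{j'. P j' \<and> (a, j') \<in> Y} \<subseteq> snd ` Y" by force
    thus "finite {j'. P j' \<and> (a, j') \<in> Y}" using fin finite_subset by blast
  qed
  have fincol: "\<And>b P. finite {i'. P i' \<and> (i', b) \<in> Y}"
  proof -
    fix b P
    have "{i'. P i' \<and> (i', b) \<in> Y} \<subseteq> fst ` Y" by force
    thus "finite {i'. P i' \<and> (i', b) \<in> Y}" using fin finite_subset by blast
  qed
  have Y11: "(1,1) \<in> Y" using assms(6) by auto
  have a11: "arm Y (1,1) = leg Y (1,1) + 1" using assms(9) by auto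
  define m where "m = 2 * k - 3"
  define S where "S = {i'. i' > 1 \<and> (i', 1) \<in> Y}"
  have cS: "card S = m - 1"
    using assms(7) a11 assms(1,2) unfolding hook_def leg_def S_def m_def by simp
  have finS: "finite S" unfolding S_def by (rule fincol)
  have col: "\<And>x. 1 \<le> x \<Longrightarrow> (x,1) \<in> Y \<longleftrightarrow> x \<le> m"
  proof -
    fix x :: nat assume x1: "1 \<le> x"
    show "(x,1) \<in> Y \<longleftrightarrow> x \<le> m"
    proof
      assume xY: "(x,1) \<in> Y"
      have "{2..x} \<subseteq> S" unfolding S_def using dc[OF xY] by auto
      hence "card {2..x} \<le> card S" using finS card_mono by blast
      thus "x \<le> m" using cS assms(1) m_def by simp
    next
      assume xm: "x \<le> m"
      show "(x,1) \<in> Y"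
      proof (rule ccontr)
        assume nx: "(x,1) \<notin> Y"
        have "S \<subseteq> {2..<x}"
        proof
          fix y assume "y \<in> S"
          hence "y > 1" "(y,1) \<in> Y" unfolding S_def by auto
          moreover have "y < x" using dc[OF \<open>(y,1) \<in> Y\<close>, of x 1] nx x1 by (cases "y < x") auto
          ultimately show "y \<in> {2..<x}" by auto
        qed
        hence "card S \<le> card {2..<x}" using card_mono by blast
        moreover have "x \<ge> 2" using nx x1 Y11 by (cases "x = 1") auto
        ultimately show False using cS xm assms(1) m_def by simp
      qed
    qed
  qed
  have im: "i \<le> m" using col i1 iY by blast
  have "{i'. i < i' \<and> (i', 1) \<in> Y} = {i<..m}" using col i1 by auto
  hence legi: "leg Y (i,1) = m - i" unfolding leg_def by simp
  have hn: "hook Y (i,1) = m" using hi assms(1,2) m_def by simp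
  show False
  proof (cases "(i,i) \<in> Y")
    case True
    hence "i \<in> {1..length eta + 1}" using assms(6) by blast
    hence "arm Y (i,i) \<ge> 1" using assms(9) by auto
    hence "card {j'. i < j' \<and> (i, j') \<in> Y} \<noteq> 0" unfolding arm_def by simp
    then obtain j where "i < j" "(i,j) \<in> Y" by (metis (no_types, lifting) Collect_empty_eq card.empty)
    hence "{2..i+1} \<subseteq> {j'. 1 < j' \<and> (i, j') \<in> Y}"
    proof -
      assume ij: "i < j" "(i,j) \<in> Y"
      show ?thesis
      proof
        fix y assume "y \<in> {2..i+1}"
        hence "1 \<le> y" "y \<le> j" "1 < y" using ij by auto
        thus "y \<in> {j'. 1 < j' \<and> (i, j') \<in> Y}" using dc[OF ij(2) i1 order_refl] by blast
      qed
    qed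
    hence "card {2..i+1} \<le> arm Y (i,1)" unfolding arm_def fst_conv snd_conv by (rule card_mono[OF finrow])
    hence "arm Y (i,1) \<ge> i" by simp
    thus False using hn legi im unfolding hook_def by simp
  next
    case False
    have "{j'. 1 < j' \<and> (i, j') \<in> Y} \<subseteq> {2..<i}"
    proof
      fix y assume "y \<in> {j'. 1 < j' \<and> (i, j') \<in> Y}"
      hence "y > 1" "(i,y) \<in> Y" by auto
      moreover have "y < i" using dc[OF \<open>(i,y) \<in> Y\<close>, of i i] False i1 by (cases "y < i") auto
      ultimately show "y \<in> {2..<i}" by auto
    qed
    hence "arm Y (i,1) \<le> card {2..<i}" unfolding arm_def using card_mono[of "{2..<i}"] by simp
    moreover have "i \<ge> 2" using False Y11 i1 by (cases "i = 1") auto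
    ultimately show False using hn legi im unfolding hook_def by simp
  qed
qed

end
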